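(* Let $\sqsubseteq$ be any of the stochastic simulation pre-orders $\sqsubseteq^S_i$, $\sqsubseteq^S_\pi$, $\sqsubseteq^S_m$. There is no stochastic CA $\mathcal{U}$ such that $\mathcal{B}\sqsubseteq\mathcal{U}$ for every stochastic CA $\mathcal{B}$ (i.e. there is no $\sqsubseteq$-universal stochastic CA).
   Context: A stochastic CA is $(Q,R,V,V',f)$ with $Q$ finite states, $R$ finite random symbols, $V=\{v_1,\dots,v_r\}$, $V'=\{v'_1,\dots,v'_{r'}\}$ finite subsets of $\mathbb{Z}$, $f:Q^r\times R^{r'}\to Q$; explicit global function $F(c,s)_z=f((c_{z+v_1},\dots,c_{z+v_r}),(s_{z+v'_1},\dots,s_{z+v'_{r'}}))$. $\nu_R$ is the uniform Bernoulli measure on $R^{\mathbb{Z}}$; the stochastic global function $S_F(c)$ is the law of $F(c,s)$ for $s\sim\nu_R$. Iterates: $F^0(c)=c$, $F^{t+1}(c,s^1,\dots,s^{t+1})=F(F^t(c,s^1,\dots,s^t),s^{t+1})$. Restriction: for injective $i:Q'\to Q$ with $Y=i(Q')^{\mathbb{Z}}$ satisfying $F(Y,R^{\mathbb{Z}})\subseteq Y$, the $i$-restriction has states $Q'$, random symbols $R$, explicit global function $I^{-1}(F(I(c),s))$ ($I$ the cellwise extension of $i$). Projection: for surjective $\pi:Q\to Q'$ with cellwise extension $\Pi$ such that $\Pi(F(c,s))=\Pi(F(c',s))$ whenever $\Pi(c)=\Pi(c')$, the $\pi$-projection has states $Q'$, random symbols $R$, explicit global function $(c',s)\mapsto\Pi(F(c,s))$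 for any $c\in\Pi^{-1}(c')$. Rescaling with $m,t\ge1,k\in\mathbb{Z}$: $\mathcal{A}^{\langle m,t,k\rangle}$ has states $Q^m$, random symbols $(R^m)^t$, explicit global function $b_m\circ\sigma_k\circ F^t(b_m^{-1}(c),b_m^{-1}(s^1),\dots,b_m^{-1}(s^t))$ where $s^i_j=(s_j)_i$, $\sigma_k(c)_z=c_{z+k}$, $b_m(c)_z=(c_{mz},\dots,c_{mz+m-1})$. $\mathcal{A}_1\sqsubseteq^S_i\mathcal{A}_2$ (resp. $\sqsubseteq^S_\pi$, $\sqsubseteq^S_m$) iff there are $m_1,m_2,t_1,t_2,k_1,k_2$ such that $\mathcal{A}_1^{\langle m_1,t_1,k_1\rangle}$ has the same stochastic global function as some $i$-restriction (resp. some $\pi$-projection, resp. some $\pi$-projection of some $i$-restriction) of $\mathcal{A}_2^{\langle m_2,t_2,k_2\rangle}$. *)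

theory Defs
  imports "HOL-Probability.Probability"
begin

text \<open>A stochastic CA (Q,R,V,V',f), with Q and R given as finite carrier sets
inside arbitrary types, V and V' as lists v_1..v_r and v'_1..v'_r'.\<close>

record ('q, 'r) sca =
  states :: "'q set"
  rsyms  :: "'r set"
  nbhd   :: "int list"
  rnbhd  :: "int list"
  rule   :: "'q list \<Rightarrow> 'r list \<Rightarrow> 'q"

definition wf_sca :: "('q, 'r) sca \<Rightarrow> bool" where
  "wf_sca A \<longleftrightarrow> finite (states A) \<and> states A \<noteq> {} \<and>
     finite (rsyms A) \<and> rsyms A \<noteq> {} \<and>
     distinct (nbhd A) \<and> distinct (rnbhd A) \<and>
     (\<forall>xs ys. length xs = length (nbhd A) \<and> set xs \<subseteq> states A \<and>
              length ys = length (rnbhd A) \<and> set ys \<subseteq> rsyms A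
              \<longrightarrow> rule A xs ys \<in> states A)"

record ('q, 'r) gca =
  gstates :: "'q set"
  grsyms  :: "'r set"
  glob    :: "(int \<Rightarrow> 'q) \<Rightarrow> (int \<Rightarrow> 'r) \<Rightarrow> (int \<Rightarrow> 'q)"

definition global_fun :: "('q, 'r) sca \<Rightarrow> (int \<Rightarrow> 'q) \<Rightarrow> (int \<Rightarrow> 'r) \<Rightarrow> (int \<Rightarrow> 'q)" where
  "global_fun A c s = (\<lambda>z. rule A (map (\<lambda>v. c (z + v)) (nbhd A)) (map (\<lambda>v. s (z + v)) (rnbhd A)))"

definition to_gca :: "('q, 'r) sca \<Rightarrow> ('q, 'r) gca" where
  "to_gca A = \<lparr>gstates = states A, grsyms = rsyms A, glob = global_fun A\<rparr>"

definition cfgs :: "'q set \<Rightarrow> (int \<Rightarrow> 'q) set" where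
  "cfgs Q = {c. \<forall>z. c z \<in> Q}"

definition bernoulli_meas :: "'r set \<Rightarrow> (int \<Rightarrow> 'r) measure" where
  "bernoulli_meas R = PiM UNIV (\<lambda>_. uniform_count_measure R)"

definition stoch :: "('q, 'r) gca \<Rightarrow> (int \<Rightarrow> 'q) \<Rightarrow> (int \<Rightarrow> 'q) measure" where
  "stoch A c = distr (bernoulli_meas (grsyms A)) (PiM UNIV (\<lambda>_. count_space (gstates A))) (glob A c)"

definition same_stoch :: "('q, 'r) gca \<Rightarrow> ('q, 'r2) gca \<Rightarrow> bool" where
  "same_stoch A B \<longleftrightarrow> gstates A = gstates B \<and> (\<forall>c \<in> cfgs (gstates A). stoch A c = stoch B c)"

definition iter_glob :: "((int \<Rightarrow> 'q) \<Rightarrow> (int \<Rightarrow> 'r) \<Rightarrow> (int \<Rightarrow> 'q)) \<Rightarrow> (int \<Rightarrow> 'q) \<Rightarrow> (int \<Rightarrow> 'r) list \<Rightarrow> (int \<Rightarrow> 'q)" where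
  "iter_glob F c ss = foldl F c ss"

definition shift :: "int \<Rightarrow> (int \<Rightarrow> 'a) \<Rightarrow> (int \<Rightarrow> 'a)" where
  "shift k c = (\<lambda>z. c (z + k))"

definition bloc :: "nat \<Rightarrow> (int \<Rightarrow> 'a) \<Rightarrow> (int \<Rightarrow> 'a list)" where
  "bloc m c = (\<lambda>z. map (\<lambda>j. c (int m * z + int j)) [0..<m])"

definition unbloc :: "nat \<Rightarrow> (int \<Rightarrow> 'a list) \<Rightarrow> (int \<Rightarrow> 'a)" where
  "unbloc m c = (\<lambda>z. c (z div int m) ! nat (z mod int m))"

text \<open>Rescaling A^<m,t,k>: states Q^m, random symbols (R^m)^t.  A random configuration
s of (R^m)^t gives s^i with s^i_j = (s_j)_i (list index i-1 for i = 1..t).\<close>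

definition rescale :: "('q, 'r) sca \<Rightarrow> nat \<Rightarrow> nat \<Rightarrow> int \<Rightarrow> ('q list, 'r list list) gca" where
  "rescale A m t k =
     \<lparr>gstates = {xs. length xs = m \<and> set xs \<subseteq> states A},
      grsyms = {ys. length ys = t \<and> (\<forall>y \<in> set ys. length y = m \<and> set y \<subseteq> rsyms A)},
      glob = (\<lambda>c s. bloc m (shift k (iter_glob (global_fun A) (unbloc m c)
                      (map (\<lambda>i. unbloc m (\<lambda>j. s j ! i)) [0..<t]))))\<rparr>"

definition is_restr :: "('q, 'r) gca \<Rightarrow> 'e set \<Rightarrow> ('e \<Rightarrow> 'q) \<Rightarrow> bool" where
  "is_restr A Q' i \<longleftrightarrow> inj_on i Q' \<and> i ` Q' \<subseteq> gstates A \<and>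
     (\<forall>c \<in> cfgs (i ` Q'). \<forall>s \<in> cfgs (grsyms A). glob A c s \<in> cfgs (i ` Q'))"

definition restr :: "('q, 'r) gca \<Rightarrow> 'e set \<Rightarrow> ('e \<Rightarrow> 'q) \<Rightarrow> ('e, 'r) gca" where
  "restr A Q' i = \<lparr>gstates = Q', grsyms = grsyms A,
     glob = (\<lambda>c s. the_inv_into Q' i \<circ> glob A (i \<circ> c) s)\<rparr>"

definition is_proj :: "('q, 'r) gca \<Rightarrow> 'e set \<Rightarrow> ('q \<Rightarrow> 'e) \<Rightarrow> bool" where
  "is_proj A Q' p \<longleftrightarrow> p ` gstates A = Q' \<and>
     (\<forall>c \<in> cfgs (gstates A). \<forall>c' \<in> cfgs (gstates A). \<forall>s \<in> cfgs (grsyms A).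
        p \<circ> c = p \<circ> c' \<longrightarrow> p \<circ> glob A c s = p \<circ> glob A c' s)"

definition proj :: "('q, 'r) gca \<Rightarrow> ('q \<Rightarrow> 'e) \<Rightarrow> ('e, 'r) gca" where
  "proj A p = \<lparr>gstates = p ` gstates A, grsyms = grsyms A,
     glob = (\<lambda>c' s. p \<circ> glob A (SOME c. c \<in> cfgs (gstates A) \<and> p \<circ> c = c') s)\<rparr>"

definition sim_i :: "('a, 'b) sca \<Rightarrow> ('c, 'd) sca \<Rightarrow> bool" where
  "sim_i A1 A2 \<longleftrightarrow> (\<exists>m1 m2 t1 t2 k1 k2. m1 \<ge> 1 \<and> m2 \<ge> 1 \<and> t1 \<ge> 1 \<and> t2 \<ge> 1 \<and>
     (\<exists>i :: 'a list \<Rightarrow> 'c list.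
        is_restr (rescale A2 m2 t2 k2) (gstates (rescale A1 m1 t1 k1)) i \<and>
        same_stoch (rescale A1 m1 t1 k1)
                   (restr (rescale A2 m2 t2 k2) (gstates (rescale A1 m1 t1 k1)) i)))"

definition sim_pi :: "('a, 'b) sca \<Rightarrow> ('c, 'd) sca \<Rightarrow> bool" where
  "sim_pi A1 A2 \<longleftrightarrow> (\<exists>m1 m2 t1 t2 k1 k2. m1 \<ge> 1 \<and> m2 \<ge> 1 \<and> t1 \<ge> 1 \<and> t2 \<ge> 1 \<and>
     (\<exists>p :: 'c list \<Rightarrow> 'a list.
        is_proj (rescale A2 m2 t2 k2) (gstates (rescale A1 m1 t1 k1)) p \<and>
        same_stoch (rescale A1 m1 t1 k1) (proj (rescale A2 m2 t2 k2) p)))"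

definition sim_m :: "('a, 'b) sca \<Rightarrow> ('c, 'd) sca \<Rightarrow> bool" where
  "sim_m A1 A2 \<longleftrightarrow> (\<exists>m1 m2 t1 t2 k1 k2. m1 \<ge> 1 \<and> m2 \<ge> 1 \<and> t1 \<ge> 1 \<and> t2 \<ge> 1 \<and>
     (\<exists>(Q' :: 'c list set) (i :: 'c list \<Rightarrow> 'c list) (p :: 'c list \<Rightarrow> 'a list).
        is_restr (rescale A2 m2 t2 k2) Q' i \<and>
        is_proj (restr (rescale A2 m2 t2 k2) Q' i) (gstates (rescale A1 m1 t1 k1)) p \<and>
        same_stoch (rescale A1 m1 t1 k1) (proj (restr (rescale A2 m2 t2 k2) Q' i) p)))"

end

theory Submission
  imports Defs
begin


lemma space_bern: "space (bernoulli_meas R) = {s. \<forall>z. s z \<in> R}"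
  by (auto simp: bernoulli_meas_def space_PiM PiE_def extensional_def space_uniform_count_measure)

lemma FD:
  fixes R :: "'r set" and J :: "int set"
  assumes R: "finite R" "R \<noteq> {}" and J: "finite J"
    and S: "S \<subseteq> space (bernoulli_meas R)"
    and det: "\<And>s s'. s \<in> S \<Longrightarrow> s' \<in> space (bernoulli_meas R) \<Longrightarrow> (\<forall>j\<in>J. s j = s' j) \<Longrightarrow> s' \<in> S"
  shows "S \<in> sets (bernoulli_meas R)"
    "measure (bernoulli_meas R) S = real (card ((\<lambda>s. restrict s J) ` S)) / real (card R) ^ card J"
proof -
  let ?M = "\<lambda>_::int. uniform_count_measure R"
  interpret M: prob_space "?M i" for i using prob_space_uniform_count_measure[OF R] .
  interpret P: product_prob_space ?M UNIV by unfold_locales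
  define T where "T = (\<lambda>s. restrict s J) ` S"
  have spM: "space (?M i) = R" for i by (simp add: space_uniform_count_measure)
  have TP: "T \<subseteq> PiE J (\<lambda>_. R)" using S unfolding T_def by (auto simp: space_bern)
  have finT: "finite T" using TP finite_PiE[OF J, of "\<lambda>_. R"] R(1) finite_subset by blast
  have Seq: "S = prod_emb UNIV ?M J T"
  proof
    show "S \<subseteq> prod_emb UNIV ?M J T" using S unfolding T_def prod_emb_def
      by (auto simp: space_bern spM PiE_def extensional_def)
  next
    show "prod_emb UNIV ?M J T \<subseteq> S"
    proof
      fix s' assume "s' \<in> prod_emb UNIV ?M J T"
      then obtain s where s: "s \<in> S" "restrict s' J = restrict s J" and sp: "s' \<in> space (bernoulli_meas R)"
        unfolding prod_emb_def T_def by (auto simp: space_bern spM PiE_def)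
      have "\<forall>j\<in>J. s j = s' j" using s(2) by (metis restrict_apply')
      then show "s' \<in> S" using det s(1) sp by blast
    qed
  qed
  have single: "{t} \<in> sets (PiM J ?M)" if "t \<in> T" for t
  proof -
    have "{t} = PiE J (\<lambda>j. {t j})" using that TP
    proof (intro equalityI subsetI)
      fix x assume "x \<in> PiE J (\<lambda>j. {t j})"
      moreover have "t \<in> extensional J" using that TP by (auto simp: PiE_def)
      ultimately show "x \<in> {t}" by (auto simp: PiE_def extensional_def intro!: ext)
    qed auto
    moreover have "PiE J (\<lambda>j. {t j}) \<in> sets (PiM J ?M)"
      using that TP by (intro sets_PiM_I_finite[OF J]) (auto simp: sets_uniform_count_measure)
    ultimately show ?thesis by simp
  qed
  have Tsets: "T \<in> sets (PiM J ?M)"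
  proof -
    have "T = (\<Union>t\<in>T. {t})" by auto
    also have "\<dots> \<in> sets (PiM J ?M)" using single finT by (intro sets.finite_UN) auto
    finally show ?thesis .
  qed
  show "S \<in> sets (bernoulli_meas R)"
    unfolding Seq bernoulli_meas_def by (rule measurable_prod_emb) (use Tsets in auto)
  have "emeasure (bernoulli_meas R) S = emeasure (PiM J ?M) T"
    unfolding Seq bernoulli_meas_def by (rule P.emeasure_PiM_emb') (use Tsets J in auto)
  also have "\<dots> = (\<Sum>t\<in>T. emeasure (PiM J ?M) {t})"
    by (rule emeasure_eq_sum_singleton[OF finT]) (use single in auto)
  also have "\<dots> = (\<Sum>t\<in>T. ennreal ((1 / real (card R)) ^ card J))"
  proof (rule sum.cong[OF refl])
    fix t assume t: "t \<in> T"
    have "{t} = PiE J (\<lambda>j. {t j})"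
    proof (intro equalityI subsetI)
      fix x assume "x \<in> PiE J (\<lambda>j. {t j})"
      moreover have "t \<in> extensional J" using t TP by (auto simp: PiE_def)
      ultimately show "x \<in> {t}" by (auto simp: PiE_def extensional_def intro!: ext)
    qed (use t TP in auto)
    then have "emeasure (PiM J ?M) {t} = (\<Prod>j\<in>J. emeasure (?M j) {t j})"
      using t TP J by (simp only:) (rule P.emeasure_PiM, auto simp: sets_uniform_count_measure)
    also have "\<dots> = (\<Prod>j\<in>J. ennreal (1 / real (card R)))"
    proof (intro prod.cong refl)
      fix j assume "j \<in> J"
      then have "t j \<in> R" using t TP by auto
      then have "emeasure (?M j) {t j} = ennreal (real (card {t j}) / real (card R))"
        using R by (intro emeasure_uniform_count_measure) auto
      also have "\<dots> = ennreal (1 / real (card R))" by simp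
      finally show "emeasure (?M j) {t j} = ennreal (1 / real (card R))" .
    qed
    also have "\<dots> = ennreal ((1 / real (card R)) ^ card J)"
      by (simp add: prod_ennreal ennreal_power)
    finally show "emeasure (PiM J ?M) {t} = ennreal ((1 / real (card R)) ^ card J)" .
  qed
  also have "\<dots> = ennreal (real (card T) * (1 / real (card R)) ^ card J)"
    by (simp add: ennreal_of_nat_eq_real_of_nat ennreal_mult)
  finally have "emeasure (bernoulli_meas R) S = ennreal (real (card T) / real (card R) ^ card J)"
    by (simp add: power_divide)
  then show "measure (bernoulli_meas R) S = real (card T) / real (card R) ^ card J"
    unfolding T_def measure_def by simp
qed


definition rad :: "('q,'r) sca \<Rightarrow> int" where
  "rad A = Max (insert 0 (abs ` set (nbhd A @ rnbhd A)))"

lemma rad_nonneg: "0 \<le> rad A"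
  unfolding rad_def by (rule Max_ge) auto

lemma rad_ge: "v \<in> set (nbhd A @ rnbhd A) \<Longrightarrow> \<bar>v\<bar> \<le> rad A"
  unfolding rad_def by (rule Max_ge) auto

lemma gf_local:
  assumes "\<And>y. \<bar>y - z\<bar> \<le> rad A \<Longrightarrow> c y = c' y \<and> s y = s' y"
  shows "global_fun A c s z = global_fun A c' s' z"
proof -
  have "map (\<lambda>v. c (z + v)) (nbhd A) = map (\<lambda>v. c' (z + v)) (nbhd A)"
    using assms rad_ge[of _ A] by (auto intro!: map_cong)
  moreover have "map (\<lambda>v. s (z + v)) (rnbhd A) = map (\<lambda>v. s' (z + v)) (rnbhd A)"
    using assms rad_ge[of _ A] by (auto intro!: map_cong)
  ultimately show ?thesis unfolding global_fun_def by (simp only:)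
qed

lemma foldl_local:
  assumes F: "\<And>c c' s s' z. (\<And>y. \<bar>y - z\<bar> \<le> \<rho> \<Longrightarrow> c y = c' y \<and> s y = s' y) \<Longrightarrow> F c s z = F c' s' z"
    and rho: "0 \<le> \<rho>"
  shows "length ss = length ss' \<Longrightarrow>
    (\<And>y. \<bar>y - z\<bar> \<le> \<rho> * int (length ss) \<Longrightarrow> c y = c' y \<and> (\<forall>i<length ss. (ss!i) y = (ss'!i) y)) \<Longrightarrow>
    foldl F c ss z = foldl F c' ss' z"
proof (induction ss arbitrary: ss' c c')
  case Nil
  then show ?case by simp
next
  case (Cons x xs)
  then obtain x' xs' where ss': "ss' = x' # xs'" "length xs = length xs'" by (cases ss') auto
  have "foldl F (F c x) xs z = foldl F (F c' x') xs' z"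
  proof (rule Cons.IH[OF ss'(2)])
    fix y assume y: "\<bar>y - z\<bar> \<le> \<rho> * int (length xs)"
    have "F c x y = F c' x' y"
    proof (rule F)
      fix y' assume "\<bar>y' - y\<bar> \<le> \<rho>"
      then have "\<bar>y' - z\<bar> \<le> \<rho> * int (length (x # xs))" using y by (simp add: algebra_simps)
      from Cons.prems(2)[OF this] show "c y' = c' y' \<and> x y' = x' y'"
        using ss' by (auto dest: spec[of _ 0])
    qed
    moreover have "\<forall>i<length xs. (xs ! i) y = (xs' ! i) y"
    proof (intro allI impI)
      fix i assume i: "i < length xs"
      have "\<bar>y - z\<bar> \<le> \<rho> * int (length (x # xs))" using y rho by (simp add: algebra_simps)
      from Cons.prems(2)[OF this] have "((x#xs) ! Suc i) y = (ss' ! Suc i) y" using i by auto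
      then show "(xs ! i) y = (xs' ! i) y" using ss' by simp
    qed
    ultimately show "F c x y = F c' x' y \<and> (\<forall>i<length xs. (xs ! i) y = (xs' ! i) y)" by simp
  qed
  then show ?case using ss' by simp
qed

lemma rescale_local:
  assumes m: "m \<ge> 1"
  shows "\<exists>J. finite J \<and> (\<forall>s s'. (\<forall>j\<in>J. s j = s' j) \<longrightarrow> glob (rescale A m t k) c s z = glob (rescale A m t k) c s' z)"
proof -
  define \<rho> where "\<rho> = rad A"
  define J where "J = (\<lambda>y. y div int m) ` {int m * z + k - \<rho> * int t .. int m * z + k + int m + \<rho> * int t}"
  have "finite J" unfolding J_def by simp
  moreover have "glob (rescale A m t k) c s z = glob (rescale A m t k) c s' z" if st: "\<forall>j\<in>J. s j = s' j" for s s'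
  proof -
    let ?ss = "\<lambda>s. map (\<lambda>i. unbloc m (\<lambda>j. s j ! i)) [0..<t]"
    have "foldl (global_fun A) (unbloc m c) (?ss s) (int m * z + int j + k) =
          foldl (global_fun A) (unbloc m c) (?ss s') (int m * z + int j + k)" if j: "j < m" for j
    proof (rule foldl_local[where \<rho>=\<rho>])
      show "global_fun A c1 s1 z1 = global_fun A c1' s1' z1"
        if "\<And>y. \<bar>y - z1\<bar> \<le> \<rho> \<Longrightarrow> c1 y = c1' y \<and> s1 y = s1' y" for c1 c1' s1 s1' z1
        using that unfolding \<rho>_def by (rule gf_local)
      show "0 \<le> \<rho>" unfolding \<rho>_def by (rule rad_nonneg)
      show "length (?ss s) = length (?ss s')" by simp
      fix y assume y: "\<bar>y - (int m * z + int j + k)\<bar> \<le> \<rho> * int (length (?ss s))"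
      have "y div int m \<in> J" unfolding J_def using y j by (intro imageI) auto
      then have "s (y div int m) = s' (y div int m)" using st by blast
      then show "unbloc m c y = unbloc m c y \<and> (\<forall>i<length (?ss s). (?ss s ! i) y = (?ss s' ! i) y)"
        by (simp add: unbloc_def)
    qed
    then show ?thesis
      by (simp add: rescale_def bloc_def shift_def iter_glob_def algebra_simps)
  qed
  ultimately show ?thesis by blast
qed



definition closed :: "('q,'r) gca \<Rightarrow> bool" where
  "closed G \<longleftrightarrow> (\<forall>c\<in>cfgs (gstates G). \<forall>s\<in>cfgs (grsyms G). glob G c s \<in> cfgs (gstates G))"

definition loc :: "('q,'r) gca \<Rightarrow> bool" where
  "loc G \<longleftrightarrow> (\<forall>c z. \<exists>J. finite J \<and> (\<forall>s s'. (\<forall>j\<in>J. s j = s' j) \<longrightarrow> glob G c s z = glob G c s' z))"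

definition good :: "('q,'r) gca \<Rightarrow> bool" where
  "good G \<longleftrightarrow> finite (gstates G) \<and> finite (grsyms G) \<and> grsyms G \<noteq> {} \<and> closed G \<and> loc G"

lemma unbloc_in:
  assumes "m \<ge> 1" "\<And>z. length (c z) = m \<and> set (c z) \<subseteq> Q"
  shows "unbloc m c \<in> cfgs Q"
proof -
  have "unbloc m c y \<in> Q" for y
  proof -
    have "nat (y mod int m) < m" using assms(1) by (simp add: nat_less_iff)
    then have "c (y div int m) ! nat (y mod int m) \<in> set (c (y div int m))"
      using assms(2) by (intro nth_mem) auto
    then show ?thesis using assms(2) unfolding unbloc_def by blast
  qed
  then show ?thesis unfolding cfgs_def by blast
qed

lemma gf_closed:
  assumes "wf_sca A" "c \<in> cfgs (states A)" "s \<in> cfgs (rsyms A)"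
  shows "global_fun A c s \<in> cfgs (states A)"
proof -
  have "rule A (map (\<lambda>v. c (z + v)) (nbhd A)) (map (\<lambda>v. s (z + v)) (rnbhd A)) \<in> states A" for z
    using assms unfolding wf_sca_def cfgs_def by (elim conjE allE impE) auto
  then show ?thesis unfolding cfgs_def global_fun_def by auto
qed

lemma foldl_closed:
  assumes "wf_sca A" "c \<in> cfgs (states A)" "\<forall>x\<in>set ss. x \<in> cfgs (rsyms A)"
  shows "foldl (global_fun A) c ss \<in> cfgs (states A)"
  using assms(2,3) by (induction ss arbitrary: c) (auto intro: gf_closed[OF assms(1)])

lemma good_rescale:
  assumes A: "wf_sca A" and m: "m \<ge> 1"
  shows "good (rescale A m t k)"
proof -
  have QA: "finite (states A)" "finite (rsyms A)" "rsyms A \<noteq> {}" using A unfolding wf_sca_def by auto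
  have fs: "finite (gstates (rescale A m t k))"
    using finite_lists_length_eq[OF QA(1), of m] unfolding rescale_def by (simp add: conj_commute)
  have eqR: "grsyms (rescale A m t k) = {ys. set ys \<subseteq> {y. set y \<subseteq> rsyms A \<and> length y = m} \<and> length ys = t}"
    unfolding rescale_def by auto
  have fr: "finite (grsyms (rescale A m t k))"
    unfolding eqR by (intro finite_lists_length_eq finite_lists_length_eq QA)
  obtain r0 where "r0 \<in> rsyms A" using QA by auto
  then have "replicate t (replicate m r0) \<in> grsyms (rescale A m t k)" unfolding eqR by auto
  then have ne: "grsyms (rescale A m t k) \<noteq> {}" by auto
  have cl: "closed (rescale A m t k)"
    unfolding closed_def
  proof (intro ballI)
    fix c s assume c: "c \<in> cfgs (gstates (rescale A m t k))" and s: "s \<in> cfgs (grsyms (rescale A m t k))"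
    have uc: "unbloc m c \<in> cfgs (states A)"
      using c m by (intro unbloc_in) (auto simp: cfgs_def rescale_def)
    have us: "\<forall>x\<in>set (map (\<lambda>i. unbloc m (\<lambda>j. s j ! i)) [0..<t]). x \<in> cfgs (rsyms A)"
    proof
      fix x assume "x \<in> set (map (\<lambda>i. unbloc m (\<lambda>j. s j ! i)) [0..<t])"
      then obtain i where i: "i < t" "x = unbloc m (\<lambda>j. s j ! i)" by auto
      have "length (s z ! i) = m \<and> set (s z ! i) \<subseteq> rsyms A" for z
      proof -
        have "s z \<in> grsyms (rescale A m t k)" using s by (auto simp: cfgs_def)
        then have "length (s z) = t" "\<forall>y\<in>set (s z). length y = m \<and> set y \<subseteq> rsyms A"
          unfolding rescale_def by auto
        then show ?thesis using i nth_mem[of i "s z"] by auto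
      qed
      then show "x \<in> cfgs (rsyms A)" using i m by (simp add: unbloc_in)
    qed
    have X: "iter_glob (global_fun A) (unbloc m c) (map (\<lambda>i. unbloc m (\<lambda>j. s j ! i)) [0..<t]) \<in> cfgs (states A)"
      unfolding iter_glob_def by (rule foldl_closed[OF A uc us])
    then show "glob (rescale A m t k) c s \<in> cfgs (gstates (rescale A m t k))"
      by (auto simp: rescale_def bloc_def shift_def cfgs_def)
  qed
  have "loc (rescale A m t k)" unfolding loc_def using rescale_local[OF m] by blast
  then show ?thesis using fs fr ne cl unfolding good_def by blast
qed

lemma good_restr:
  assumes "good G" "is_restr G Q' i"
  shows "good (restr G Q' i)"
proof -
  have fin: "finite Q'"
    using assms unfolding good_def is_restr_def by (metis finite_imageD finite_subset)
  have cl: "closed (restr G Q' i)"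
    unfolding closed_def
  proof (intro ballI)
    fix c s assume c: "c \<in> cfgs (gstates (restr G Q' i))" and s: "s \<in> cfgs (grsyms (restr G Q' i))"
    have "i \<circ> c \<in> cfgs (i ` Q')" using c by (auto simp: cfgs_def restr_def)
    then have g: "glob G (i \<circ> c) s \<in> cfgs (i ` Q')" using assms(2) s unfolding is_restr_def
      by (auto simp: restr_def)
    have "the_inv_into Q' i (glob G (i \<circ> c) s z) \<in> Q'" for z
    proof -
      obtain q where "q \<in> Q'" "glob G (i \<circ> c) s z = i q" using g by (auto simp: cfgs_def)
      then show ?thesis using assms(2) the_inv_into_f_f[of i Q' q] unfolding is_restr_def by simp
    qed
    then show "glob (restr G Q' i) c s \<in> cfgs (gstates (restr G Q' i))"
      by (auto simp: restr_def cfgs_def)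
  qed
  have "loc (restr G Q' i)"
    unfolding loc_def
  proof (intro allI)
    fix c z
    obtain J where J: "finite J" "\<forall>s s'. (\<forall>j\<in>J. s j = s' j) \<longrightarrow> glob G (i \<circ> c) s z = glob G (i \<circ> c) s' z"
      using assms(1) unfolding good_def loc_def by blast
    show "\<exists>J. finite J \<and> (\<forall>s s'. (\<forall>j\<in>J. s j = s' j) \<longrightarrow> glob (restr G Q' i) c s z = glob (restr G Q' i) c s' z)"
    proof (intro exI[of _ J] conjI allI impI)
      fix s s' :: "int \<Rightarrow> 'b" assume "\<forall>j\<in>J. s j = s' j"
      then have "glob G (i \<circ> c) s z = glob G (i \<circ> c) s' z" using J(2) by blast
      then show "glob (restr G Q' i) c s z = glob (restr G Q' i) c s' z" by (simp add: restr_def)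
    qed (rule J(1))
  qed
  then show ?thesis using fin cl assms(1) unfolding good_def by (simp add: restr_def)
qed

lemma good_proj:
  assumes "good G"
  shows "good (proj G p)"
proof -
  have cl: "closed (proj G p)"
    unfolding closed_def
  proof (intro ballI)
    fix c' s assume c': "c' \<in> cfgs (gstates (proj G p))" and s: "s \<in> cfgs (grsyms (proj G p))"
    define c0 where "c0 = (\<lambda>z. SOME q. q \<in> gstates G \<and> p q = c' z)"
    have "\<exists>q. q \<in> gstates G \<and> p q = c' z" for z
    proof -
      have "c' z \<in> p ` gstates G" using c' by (simp add: cfgs_def proj_def)
      then obtain q where "q \<in> gstates G" "c' z = p q" by (auto simp: image_iff)
      then show ?thesis by auto
    qed
    then have "c0 z \<in> gstates G \<and> p (c0 z) = c' z" for z unfolding c0_def by (metis (mono_tags, lifting) someI_ex)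
    then have "c0 \<in> cfgs (gstates G) \<and> p \<circ> c0 = c'" by (auto simp: cfgs_def)
    then have ex: "\<exists>c. c \<in> cfgs (gstates G) \<and> p \<circ> c = c'" by blast
    define c where "c = (SOME c. c \<in> cfgs (gstates G) \<and> p \<circ> c = c')"
    have "c \<in> cfgs (gstates G)" unfolding c_def using someI_ex[OF ex] by blast
    then have "glob G c s \<in> cfgs (gstates G)" using assms s unfolding good_def closed_def
      by (auto simp: proj_def)
    then show "glob (proj G p) c' s \<in> cfgs (gstates (proj G p))"
      by (auto simp: proj_def cfgs_def c_def)
  qed
  have "loc (proj G p)"
    unfolding loc_def
  proof (intro allI)
    fix c z
    define c1 where "c1 = (SOME c1. c1 \<in> cfgs (gstates G) \<and> p \<circ> c1 = c)"
    obtain J where J: "finite J" "\<forall>s s'. (\<forall>j\<in>J. s j = s' j) \<longrightarrow> glob G c1 s z = glob G c1 s' z"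
      using assms(1) unfolding good_def loc_def by blast
    show "\<exists>J. finite J \<and> (\<forall>s s'. (\<forall>j\<in>J. s j = s' j) \<longrightarrow> glob (proj G p) c s z = glob (proj G p) c s' z)"
    proof (intro exI[of _ J] conjI allI impI)
      fix s s' :: "int \<Rightarrow> 'b" assume "\<forall>j\<in>J. s j = s' j"
      then have "glob G c1 s z = glob G c1 s' z" using J(2) by blast
      then show "glob (proj G p) c s z = glob (proj G p) c s' z" by (simp add: proj_def c1_def)
    qed (rule J(1))
  qed
  then show ?thesis using cl assms(1) unfolding good_def by (simp add: proj_def)
qed



lemma glob_meas:
  assumes "good G" "c \<in> cfgs (gstates G)"
  shows "glob G c \<in> measurable (bernoulli_meas (grsyms G)) (PiM UNIV (\<lambda>_. count_space (gstates G)))"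
proof -
  let ?R = "grsyms G" and ?Q = "gstates G"
  have g: "finite ?Q" "finite ?R" "?R \<noteq> {}" "closed G" "loc G" using assms(1) unfolding good_def by auto
  have cl: "glob G c s \<in> cfgs ?Q" if "s \<in> space (bernoulli_meas ?R)" for s
    using g(4) assms(2) that unfolding closed_def by (auto simp: space_bern cfgs_def)
  have "(\<lambda>s z. glob G c s z) \<in> measurable (bernoulli_meas ?R) (PiM UNIV (\<lambda>_. count_space ?Q))"
  proof (rule measurable_PiM_single')
    fix z :: int
    obtain J where J: "finite J" "\<forall>s s'. (\<forall>j\<in>J. s j = s' j) \<longrightarrow> glob G c s z = glob G c s' z"
      using g(5) unfolding loc_def by blast
    show "(\<lambda>s. glob G c s z) \<in> measurable (bernoulli_meas ?R) (count_space ?Q)"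
      unfolding measurable_count_space_eq2[OF g(1)]
    proof (intro conjI ballI)
      show "(\<lambda>s. glob G c s z) \<in> space (bernoulli_meas ?R) \<rightarrow> ?Q" using cl by (auto simp: cfgs_def)
      fix a assume "a \<in> ?Q"
      have "(\<lambda>s. glob G c s z) -` {a} \<inter> space (bernoulli_meas ?R) \<in> sets (bernoulli_meas ?R)"
      proof (rule FD(1)[OF g(2,3) J(1)])
        show "(\<lambda>s. glob G c s z) -` {a} \<inter> space (bernoulli_meas ?R) \<subseteq> space (bernoulli_meas ?R)" by blast
        fix s s' assume "s \<in> (\<lambda>s. glob G c s z) -` {a} \<inter> space (bernoulli_meas ?R)"
          "s' \<in> space (bernoulli_meas ?R)" "\<forall>j\<in>J. s j = s' j"
        then show "s' \<in> (\<lambda>s. glob G c s z) -` {a} \<inter> space (bernoulli_meas ?R)" using J(2) by auto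
      qed
      then show "(\<lambda>s. glob G c s z) -` {a} \<inter> space (bernoulli_meas ?R) \<in> sets (bernoulli_meas ?R)" .
    qed
  next
    show "(\<lambda>s z. glob G c s z) \<in> space (bernoulli_meas ?R) \<rightarrow> (\<Pi>\<^sub>E z\<in>UNIV. space (count_space ?Q))"
      using cl by (auto simp: cfgs_def)
  qed
  then show ?thesis by simp
qed

lemma key:
  assumes "good G" "c \<in> cfgs (gstates G)"
  shows "\<exists>J. finite J \<and> (\<forall>s s'. (\<forall>j\<in>J. s j = s' j) \<longrightarrow> glob G c s 0 = glob G c s' 0) \<and>
    measure (stoch G c) {x \<in> space (PiM UNIV (\<lambda>_. count_space (gstates G))). x 0 = w} =
    real (card ((\<lambda>s. restrict s J) ` {s \<in> space (bernoulli_meas (grsyms G)). glob G c s 0 = w})) / real (card (grsyms G)) ^ card J"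
proof -
  let ?R = "grsyms G" and ?Q = "gstates G"
  let ?N = "PiM UNIV (\<lambda>_::int. count_space ?Q)" and ?M = "bernoulli_meas ?R"
  have g: "finite ?Q" "finite ?R" "?R \<noteq> {}" "closed G" "loc G" using assms(1) unfolding good_def by auto
  have meas: "glob G c \<in> measurable ?M ?N" by (rule glob_meas[OF assms])
  obtain J where J: "finite J" "\<forall>s s'. (\<forall>j\<in>J. s j = s' j) \<longrightarrow> glob G c s 0 = glob G c s' 0"
    using g(5) unfolding loc_def by blast
  have Eeq: "{x \<in> space ?N. x 0 = w} = (\<lambda>x. x 0) -` ({w} \<inter> ?Q) \<inter> space ?N"
    by (auto simp: space_PiM)
  have E: "{x \<in> space ?N. x 0 = w} \<in> sets ?N"
    unfolding Eeq by (rule measurable_sets[OF measurable_component_singleton]) auto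
  have pre: "glob G c -` {x \<in> space ?N. x 0 = w} \<inter> space ?M = {s \<in> space ?M. glob G c s 0 = w}"
    using measurable_space[OF meas] by auto
  have "measure (stoch G c) {x \<in> space ?N. x 0 = w} = measure ?M {s \<in> space ?M. glob G c s 0 = w}"
    unfolding stoch_def by (subst measure_distr[OF meas E], subst pre, rule refl)
  also have "\<dots> = real (card ((\<lambda>s. restrict s J) ` {s \<in> space ?M. glob G c s 0 = w})) / real (card ?R) ^ card J"
  proof (rule FD(2)[OF g(2,3) J(1)])
    fix s s' assume "s \<in> {s \<in> space ?M. glob G c s 0 = w}" "s' \<in> space ?M" "\<forall>j\<in>J. s j = s' j"
    then show "s' \<in> {s \<in> space ?M. glob G c s 0 = w}" using J(2) by auto
  qed auto
  finally show ?thesis using J by blast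
qed



definition Bca :: "nat \<Rightarrow> (nat, nat) sca" where
  "Bca r = \<lparr>states = {..<Suc r}, rsyms = {..<Suc r}, nbhd = [], rnbhd = [0], rule = (\<lambda>xs ys. hd ys)\<rparr>"

lemma wf_B: "wf_sca (Bca r)"
  unfolding wf_sca_def Bca_def by (auto simp: length_Suc_conv)

lemma gf_B: "global_fun (Bca r) = (\<lambda>c s. s)"
  by (auto simp: global_fun_def Bca_def intro!: ext)

lemma foldl_last: "xs \<noteq> [] \<Longrightarrow> foldl (\<lambda>c s. s) c xs = last xs"
  by (induction xs arbitrary: c) auto

lemma const_glob:
  assumes m: "m \<ge> 1" and t: "t \<ge> 1"
  shows "glob (rescale (Bca r) m t k) c (\<lambda>_. replicate t (replicate m a)) z = replicate m a"
proof -
  have u: "unbloc m (\<lambda>j. replicate t (replicate m a) ! i) = (\<lambda>_. a)" if "i < t" for i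
  proof
    fix y
    have "nat (y mod int m) < m" using m by (simp add: nat_less_iff)
    then show "unbloc m (\<lambda>j. replicate t (replicate m a) ! i) y = a" using that by (simp add: unbloc_def)
  qed
  have ne: "map (\<lambda>i. unbloc m (\<lambda>j. replicate t (replicate m a) ! i)) [0..<t] \<noteq> []" using t by simp
  have "last (map (\<lambda>i. unbloc m (\<lambda>j. replicate t (replicate m a) ! i)) [0..<t]) = (\<lambda>_. a)"
    using t u[of "t - 1"] by (simp add: last_map)
  then have "iter_glob (global_fun (Bca r)) (unbloc m c) (map (\<lambda>i. unbloc m (\<lambda>j. replicate t (replicate m a) ! i)) [0..<t]) = (\<lambda>_. a)"
    unfolding iter_glob_def gf_B using foldl_last[OF ne] by simp
  then show ?thesis by (simp add: rescale_def bloc_def shift_def map_replicate_const)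
qed

lemma card_grsyms:
  assumes "wf_sca A"
  shows "card (grsyms (rescale A m t k)) = (card (rsyms A) ^ m) ^ t"
proof -
  have QA: "finite (rsyms A)" using assms unfolding wf_sca_def by auto
  have eqR: "grsyms (rescale A m t k) = {ys. set ys \<subseteq> {y. set y \<subseteq> rsyms A \<and> length y = m} \<and> length ys = t}"
    unfolding rescale_def by auto
  show ?thesis unfolding eqR
    by (simp add: card_lists_length_eq finite_lists_length_eq QA)
qed



lemma arith_contra:
  fixes a b nB n' L N :: nat
  assumes "coprime nB n'" "0 < a" "a < nB ^ L" "real a / real nB ^ L = real b / real n' ^ N" "0 < n'" "0 < nB"
  shows False
proof -
  have "real a * real n' ^ N = real b * real nB ^ L"
    using assms(4-6) by (simp add: field_simps)
  then have "a * n' ^ N = b * nB ^ L" by (metis of_nat_eq_iff of_nat_mult of_nat_power)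
  then have "nB ^ L dvd a * n' ^ N" by simp
  moreover have "coprime (nB ^ L) (n' ^ N)" using assms(1) by simp
  ultimately have "nB ^ L dvd a" using coprime_dvd_mult_left_iff by blast
  then have "nB ^ L \<le> a" using assms(2) by (simp add: dvd_imp_le)
  then show False using assms(3) by simp
qed

lemma nosim:
  fixes U :: "('q,'r) sca" and G :: "(nat list, 'r list list) gca"
  assumes U: "wf_sca U" and m1: "m1 \<ge> 1" and t1: "t1 \<ge> 1"
    and G: "good G" "grsyms G = grsyms (rescale U m2 t2 k2)"
    and same: "same_stoch (rescale (Bca (card (rsyms U))) m1 t1 k1) G"
  shows False
proof -
  define r where "r = card (rsyms U)"
  have r: "r \<ge> 1" using U unfolding wf_sca_def r_def by (auto simp: Suc_le_eq card_gt_0_iff)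
  define GB where "GB = rescale (Bca r) m1 t1 k1"
  have gB: "good GB" unfolding GB_def using good_rescale[OF wf_B m1] .
  define c0 :: "int \<Rightarrow> nat list" where "c0 = (\<lambda>_. replicate m1 0)"
  define w where "w = replicate m1 (0::nat)"
  have c0: "c0 \<in> cfgs (gstates GB)" by (auto simp: c0_def GB_def rescale_def Bca_def cfgs_def)
  have sq: "gstates GB = gstates G" "stoch GB c0 = stoch G c0"
    using same c0 unfolding same_stoch_def GB_def r_def by auto
  obtain JB where JB: "finite JB" "\<forall>s s'. (\<forall>j\<in>JB. s j = s' j) \<longrightarrow> glob GB c0 s 0 = glob GB c0 s' 0"
    "measure (stoch GB c0) {x \<in> space (PiM UNIV (\<lambda>_. count_space (gstates GB))). x 0 = w} =
    real (card ((\<lambda>s. restrict s JB) ` {s \<in> space (bernoulli_meas (grsyms GB)). glob GB c0 s 0 = w})) / real (card (grsyms GB)) ^ card JB"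
    using key[OF gB c0] by blast
  obtain J' where J': "measure (stoch G c0) {x \<in> space (PiM UNIV (\<lambda>_. count_space (gstates G))). x 0 = w} =
    real (card ((\<lambda>s. restrict s J') ` {s \<in> space (bernoulli_meas (grsyms G)). glob G c0 s 0 = w})) / real (card (grsyms G)) ^ card J'"
    using key[OF G(1), of c0 w] c0 sq(1) by auto
  define RB where "RB = grsyms GB"
  define SB where "SB = {s \<in> space (bernoulli_meas RB). glob GB c0 s 0 = w}"
  define TB where "TB = (\<lambda>s. restrict s JB) ` SB"
  have nB: "card RB = (Suc r ^ m1) ^ t1"
    unfolding RB_def GB_def card_grsyms[OF wf_B] by (simp add: Bca_def)
  have n': "card (grsyms G) = (r ^ m2) ^ t2"
    unfolding G(2) r_def by (rule card_grsyms[OF U])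
  have finRB: "finite RB" using gB unfolding good_def RB_def by simp
  have TBsub: "TB \<subseteq> PiE JB (\<lambda>_. RB)"
    unfolding TB_def SB_def by (auto simp: space_bern)
  define s1 :: "int \<Rightarrow> nat list list" where "s1 = (\<lambda>_. replicate t1 (replicate m1 0))"
  define s2 :: "int \<Rightarrow> nat list list" where "s2 = (\<lambda>_. replicate t1 (replicate m1 1))"
  have sp1: "s1 \<in> space (bernoulli_meas RB)" using r
    by (auto simp: space_bern s1_def RB_def GB_def rescale_def Bca_def)
  have sp2: "s2 \<in> space (bernoulli_meas RB)" using r
    by (auto simp: space_bern s2_def RB_def GB_def rescale_def Bca_def)
  have g1: "glob GB c0 s1 0 = w" unfolding GB_def s1_def w_def by (rule const_glob[OF m1 t1])
  have g2: "glob GB c0 s2 0 = replicate m1 1" unfolding GB_def s2_def by (rule const_glob[OF m1 t1])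
  have "w \<noteq> replicate m1 1" using m1 unfolding w_def by (cases m1) auto
  then have g2': "glob GB c0 s2 0 \<noteq> w" using g2 by simp
  have finP: "finite (PiE JB (\<lambda>_. RB))" using finRB JB(1) by (simp add: finite_PiE)
  have "restrict s1 JB \<in> TB" using sp1 g1 unfolding TB_def SB_def by auto
  then have a0: "0 < card TB" using finite_subset[OF TBsub finP] by (auto simp: card_gt_0_iff)
  have "restrict s2 JB \<notin> TB"
  proof
    assume "restrict s2 JB \<in> TB"
    then obtain s where s: "s \<in> SB" "restrict s2 JB = restrict s JB" unfolding TB_def by auto
    then have "\<forall>j\<in>JB. s j = s2 j" by (metis restrict_apply')
    then have "glob GB c0 s 0 = glob GB c0 s2 0" using JB(2) by blast
    then show False using s(1) g2' unfolding SB_def by simp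
  qed
  moreover have "restrict s2 JB \<in> PiE JB (\<lambda>_. RB)" using sp2 by (auto simp: space_bern)
  ultimately have "TB \<subset> PiE JB (\<lambda>_. RB)" using TBsub by blast
  then have "card TB < card (PiE JB (\<lambda>_. RB))" using finP by (rule psubset_card_mono[rotated])
  also have "\<dots> = card RB ^ card JB" using JB(1) by (simp add: card_PiE)
  finally have aL: "card TB < card RB ^ card JB" .
  have eq: "real (card TB) / real (card RB) ^ card JB =
     real (card ((\<lambda>s. restrict s J') ` {s \<in> space (bernoulli_meas (grsyms G)). glob G c0 s 0 = w})) / real (card (grsyms G)) ^ card J'"
    using JB(3) J' sq unfolding TB_def SB_def RB_def by simp
  show False
  proof (rule arith_contra[of "card RB" "card (grsyms G)" "card TB" "card JB"])
    show "coprime (card RB) (card (grsyms G))" unfolding nB n' by simp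
    show "0 < card TB" by (rule a0)
    show "card TB < card RB ^ card JB" by (rule aL)
    show "0 < card (grsyms G)" unfolding n' using r by simp
    show "0 < card RB" unfolding nB by simp
  qed (use eq in simp)
qed



theorem corollary1:
  fixes U :: "('q, 'r) sca"
  assumes "wf_sca U"
  shows "(\<exists>B :: (nat, nat) sca. wf_sca B \<and> \<not> sim_i B U) \<and>
         (\<exists>B :: (nat, nat) sca. wf_sca B \<and> \<not> sim_pi B U) \<and>
         (\<exists>B :: (nat, nat) sca. wf_sca B \<and> \<not> sim_m B U)"
proof -
  define B where "B = Bca (card (rsyms U))"
  have wB: "wf_sca B" unfolding B_def by (rule wf_B)
  have gU: "good (rescale U m t k)" if "m \<ge> 1" for m t k using good_rescale[OF assms that] .
  have "\<not> sim_i B U"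
  proof
    assume "sim_i B U"
    then obtain m1 m2 t1 t2 k1 k2 i where h: "m1 \<ge> 1" "m2 \<ge> 1" "t1 \<ge> 1"
      "is_restr (rescale U m2 t2 k2) (gstates (rescale B m1 t1 k1)) i"
      "same_stoch (rescale B m1 t1 k1) (restr (rescale U m2 t2 k2) (gstates (rescale B m1 t1 k1)) i)"
      unfolding sim_i_def by blast
    show False
      by (rule nosim[OF assms h(1,3) good_restr[OF gU[OF h(2)] h(4)]])
         (use h(5) in \<open>simp_all add: restr_def B_def\<close>)
  qed
  moreover have "\<not> sim_pi B U"
  proof
    assume "sim_pi B U"
    then obtain m1 m2 t1 t2 k1 k2 p where h: "m1 \<ge> 1" "m2 \<ge> 1" "t1 \<ge> 1"
      "same_stoch (rescale B m1 t1 k1) (proj (rescale U m2 t2 k2) p)"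
      unfolding sim_pi_def by blast
    show False
      by (rule nosim[OF assms h(1,3) good_proj[OF gU[OF h(2)]]])
         (use h(4) in \<open>simp_all add: proj_def B_def\<close>)
  qed
  moreover have "\<not> sim_m B U"
  proof
    assume "sim_m B U"
    then obtain m1 m2 t1 t2 k1 k2 and Q' :: "'q list set" and i p where h: "m1 \<ge> 1" "m2 \<ge> 1" "t1 \<ge> 1"
      "is_restr (rescale U m2 t2 k2) Q' i"
      "same_stoch (rescale B m1 t1 k1) (proj (restr (rescale U m2 t2 k2) Q' i) p)"
      unfolding sim_m_def by (elim exE conjE) blast
    show False
      by (rule nosim[OF assms h(1,3) good_proj[OF good_restr[OF gU[OF h(2)] h(4)]]])
         (use h(5) in \<open>simp_all add: proj_def restr_def B_def\<close>)
  qed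
  ultimately show ?thesis using wB by blast
qed

end
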